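(* Consider the autonomous system $\ddot q^{a}=-\Gamma^{a}_{bc}(q)\dot q^{b}\dot q^{c}-Q^{a}(q)$ on a (pseudo-)Riemannian manifold with metric $\gamma_{ab}$. Let $m\ge 3$ and $n\ge 1$ be integers. Suppose we are given: a constant $s$; a smooth function $G(q)$; an $m$th-order Killing tensor $C_{(0)i_1\dots i_m}(q)$; and, for each $k=0,1,\dots,n$ and $r=1,\dots,m-1$, totally symmetric $r$-rank tensor fields $L_{(k)i_1\dots i_r}(q)$, such that: (i) for $k=0,\dots,n-1$, the tensor $L_{(k)(i_1\dots i_{m-1};i_m)}$ is an $m$th-order Killing tensor, and $L_{(n)i_1\dots i_{m-1}}$ is an $(m-1)$th-order Killing tensor; (ii) $L_{(n)i_1}Q^{i_1}=s$; (iii) the following hold: \begin{align*} &L_{(n)(i_1\dots i_{m-2};i_{m-1})}=-\tfrac{m}{n}L_{(n-1)(i_1\dots i_{m-1};i_m)}Q^{i_m},\\ &L_{(k-1)(i_1\dots i_{m-2};i_{m-1})}=-\tfrac{m}{k-1}L_{(k-2)(i_1\dots i_{m-1};i_m)}Q^{i_m}-k\,L_{(k)i_1\dots i_{m-1}},\quad k=2,\dots,n,\\ &L_{(0)(i_1\dots i_{m-2};i_{m-1})}=m\,C_{(0)i_1\dots i_{m-1}i_m}Q^{i_m}-L_{(1)i_1\dots i_{m-1}},\\ &L_{(n)(i_1\dots i_{r-1};i_r)}=(r+1)L_{(n)i_1\dots i_r i_{r+1}}Q^{i_{r+1}},\quad r=2,\dots,m-2,\\ &L_{(k-1)(i_1\dots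 i_{r-1};i_r)}=(r+1)L_{(k-1)i_1\dots i_r i_{r+1}}Q^{i_{r+1}}-k\,L_{(k)i_1\dots i_r},\quad k=1,\dots,n,\ r=2,\dots,m-2,\\ &\big(L_{(n-1)c}Q^{c}\big)_{,i_1}=2n\,L_{(n)i_1i_2}Q^{i_2},\\ &\big(L_{(k-2)c}Q^{c}\big)_{,i_1}=2(k-1)L_{(k-1)i_1i_2}Q^{i_2}-k(k-1)L_{(k)i_1},\quad k=2,\dots,n,\\ &G_{,i_1}=2L_{(0)i_1i_2}Q^{i_2}-L_{(1)i_1}. \end{align*} Then \begin{align*} I^{(m)}_n=&\Big(C_{(0)i_1\dots i_m}-\sum_{k=1}^{n}\frac{t^{k}}{k}L_{(k-1)(i_1\dots i_{m-1};i_m)}\Big)\dot q^{i_1}\cdots\dot q^{i_m}+\sum_{r=1}^{m-1}\sum_{k=0}^{n}t^{k}L_{(k)i_1\dots i_r}\dot q^{i_1}\cdots\dot q^{i_r}\\ &+s\frac{t^{n+1}}{n+1}+\sum_{k=1}^{n}\frac{t^{k}}{k}L_{(k-1)c}Q^{c}+G(q) \end{align*} is a first integral of the system (constant along every solution).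
   Context: Indices are raised and lowered with $\gamma_{ab}$; Einstein summation convention; $\Gamma^a_{bc}$ are the Christoffel symbols of $\gamma_{ab}$; a comma denotes a partial derivative, a semicolon the Levi-Civita covariant derivative of $\gamma_{ab}$, and round brackets around indices denote total symmetrization (normalized). A totally symmetric tensor $K_{i_1\dots i_p}$ is a $p$th-order Killing tensor if $K_{(i_1\dots i_p;i_{p+1})}=0$. When $m=3$ the conditions with $r=2,\dots,m-2$ are vacuous; when $n=1$ the conditions with $k=2,\dots,n$ are vacuous. A first integral is a function of $(t,q,\dot q)$ constant along all solutions. *)

theory Defs
  imports "HOL-Analysis.Analysis" "HOL-Library.Multiset"
begin

text \<open>Everything is expressed in a single coordinate chart: an open set U of real^'n
  (the index type 'n is an arbitrary finite type, i.e. dimension CARD('n)).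
  Covariant tensors of rank r are functions  q \<mapsto> (index list of length r \<mapsto> component).\<close>

type_synonym 'n tensor = "real^'n \<Rightarrow> 'n list \<Rightarrow> real"

definition pd :: "(real^'n \<Rightarrow> real) \<Rightarrow> 'n \<Rightarrow> real^'n \<Rightarrow> real" where
  "pd f i q = frechet_derivative f (at q) (axis i 1)"

fun Ck :: "nat \<Rightarrow> (real^'n) set \<Rightarrow> (real^'n \<Rightarrow> real) \<Rightarrow> bool" where
  "Ck 0 U f = continuous_on U f"
| "Ck (Suc k) U f = ((\<forall>q\<in>U. f differentiable (at q)) \<and> continuous_on U f \<and> (\<forall>i. Ck k U (pd f i)))"

definition smooth_on :: "(real^'n) set \<Rightarrow> (real^'n \<Rightarrow> real) \<Rightarrow> bool" where
  "smooth_on U f = (\<forall>k. Ck k U f)"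

definition smooth_tensor :: "(real^'n) set \<Rightarrow> nat \<Rightarrow> 'n tensor \<Rightarrow> bool" where
  "smooth_tensor U r T = (\<forall>xs. length xs = r \<longrightarrow> smooth_on U (\<lambda>q. T q xs))"

definition sym_tensor :: "(real^'n) set \<Rightarrow> nat \<Rightarrow> 'n tensor \<Rightarrow> bool" where
  "sym_tensor U r T = (\<forall>q\<in>U. \<forall>xs ys. length xs = r \<longrightarrow> mset xs = mset ys \<longrightarrow> T q xs = T q ys)"

definition christ :: "(real^'n \<Rightarrow> real^'n^'n) \<Rightarrow> 'n \<Rightarrow> 'n \<Rightarrow> 'n \<Rightarrow> real^'n \<Rightarrow> real" where
  "christ g a b c q = (1/2) * (\<Sum>d\<in>UNIV. matrix_inv (g q) $ a $ d *
      (pd (\<lambda>p. g p $ d $ b) c q + pd (\<lambda>p. g p $ d $ c) b q - pd (\<lambda>p. g p $ b $ c) d q))"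

text \<open>Covariant derivative: (covd g T) q (xs @ [j]) = T_{xs;j}.\<close>
definition covd :: "(real^'n \<Rightarrow> real^'n^'n) \<Rightarrow> 'n tensor \<Rightarrow> 'n tensor" where
  "covd g T q ys = (let xs = butlast ys; j = last ys in
      pd (\<lambda>p. T p xs) j q
      - (\<Sum>p<length xs. \<Sum>c\<in>UNIV. christ g c j (xs ! p) q * T q (xs[p := c])))"

definition symz :: "'n tensor \<Rightarrow> 'n tensor" where
  "symz T q xs = (\<Sum>\<sigma>\<in>{\<sigma>. \<sigma> permutes {..<length xs}}.
        T q (map (\<lambda>i. xs ! \<sigma> i) [0..<length xs])) / fact (length xs)"

definition killing :: "(real^'n \<Rightarrow> real^'n^'n) \<Rightarrow> (real^'n) set \<Rightarrow> nat \<Rightarrow> 'n tensor \<Rightarrow> bool" where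
  "killing g U p K = (sym_tensor U p K \<and>
      (\<forall>q\<in>U. \<forall>xs. length xs = Suc p \<longrightarrow> symz (covd g K) q xs = 0))"

definition contr :: "'n tensor \<Rightarrow> (real^'n \<Rightarrow> real^'n) \<Rightarrow> real^'n \<Rightarrow> 'n list \<Rightarrow> real" where
  "contr T Q q xs = (\<Sum>c\<in>UNIV. T q (xs @ [c]) * Q q $ c)"

definition vpow :: "'n tensor \<Rightarrow> nat \<Rightarrow> real^'n \<Rightarrow> real^'n \<Rightarrow> real" where
  "vpow T r q v = (\<Sum>xs\<in>{xs. length xs = r}. T q xs * prod_list (map (\<lambda>i. v $ i) xs))"

definition is_solution :: "(real^'n \<Rightarrow> real^'n^'n) \<Rightarrow> (real^'n \<Rightarrow> real^'n) \<Rightarrow> (real^'n) set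
    \<Rightarrow> real set \<Rightarrow> (real \<Rightarrow> real^'n) \<Rightarrow> (real \<Rightarrow> real^'n) \<Rightarrow> bool" where
  "is_solution g Q U J x v = (open J \<and> is_interval J \<and>
     (\<exists>a. \<forall>t\<in>J. x t \<in> U \<and> (x has_vector_derivative v t) (at t) \<and>
          (v has_vector_derivative a t) (at t) \<and>
          (\<forall>i. a t $ i = - (\<Sum>b\<in>UNIV. \<Sum>c\<in>UNIV. christ g i b c (x t) * v t $ b * v t $ c) - Q (x t) $ i)))"

definition first_integral :: "(real^'n \<Rightarrow> real^'n^'n) \<Rightarrow> (real^'n \<Rightarrow> real^'n) \<Rightarrow> (real^'n) set
    \<Rightarrow> (real \<Rightarrow> real^'n \<Rightarrow> real^'n \<Rightarrow> real) \<Rightarrow> bool" where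
  "first_integral g Q U F = (\<forall>J x v. is_solution g Q U J x v \<longrightarrow>
      (\<forall>t1\<in>J. \<forall>t2\<in>J. F t1 (x t1) (v t1) = F t2 (x t2) (v t2)))"

text \<open>The candidate first integral I^(m)_n; L k r is the rank-r tensor L_(k).\<close>
definition Imn :: "(real^'n \<Rightarrow> real^'n^'n) \<Rightarrow> (real^'n \<Rightarrow> real^'n) \<Rightarrow> 'n tensor
    \<Rightarrow> (nat \<Rightarrow> nat \<Rightarrow> 'n tensor) \<Rightarrow> (real^'n \<Rightarrow> real) \<Rightarrow> real \<Rightarrow> nat \<Rightarrow> nat
    \<Rightarrow> real \<Rightarrow> real^'n \<Rightarrow> real^'n \<Rightarrow> real" where
  "Imn g Q C L G s m n t q v =
     vpow (\<lambda>p xs. C p xs - (\<Sum>k=1..n. t ^ k / real k * symz (covd g (L (k - 1) (m - 1))) p xs)) m q v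
     + (\<Sum>r=1..m - 1. \<Sum>k=0..n. t ^ k * vpow (L k r) r q v)
     + s * t ^ (n + 1) / real (n + 1)
     + (\<Sum>k=1..n. t ^ k / real k * contr (L (k - 1) 1) Q q [])
     + G q"

end

theory Submission
  imports Defs
begin


abbreviation pv :: "real^'n \<Rightarrow> 'n list \<Rightarrow> real" where
  "pv v xs \<equiv> prod_list (map (\<lambda>i. v $ i) xs)"

lemma finite_len: "finite {xs::('n::finite) list. length xs = r}"
  using finite_lists_length_eq[of "UNIV::'n set" r] by simp

lemma vpow_0: "vpow T 0 q v = T q []"
  by (simp add: vpow_def)

lemma len1: "{xs::'n list. length xs = Suc 0} = (\<lambda>j. [j]) ` UNIV"
  by (auto simp: length_Suc_conv)

lemma vpow_1: "vpow T (Suc 0) q v = (\<Sum>j\<in>UNIV. T q [j] * v $ j)"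
  unfolding vpow_def len1 by (subst sum.reindex) (auto simp: inj_on_def)

lemma sum_len_Suc:
  "(\<Sum>ys\<in>{ys::('n::finite) list. length ys = Suc r}. f ys) = (\<Sum>xs\<in>{xs. length xs = r}. \<Sum>j\<in>UNIV. f (xs @ [j]))"
proof -
  have "(\<Sum>ys\<in>{ys::'n list. length ys = Suc r}. f ys) = (\<Sum>p\<in>{xs. length xs = r} \<times> UNIV. f (fst p @ [snd p]))"
  proof (rule sum.reindex_bij_witness[where i="\<lambda>p. fst p @ [snd p]" and j="\<lambda>ys. (butlast ys, last ys)"])
    fix ys :: "'n list" assume "ys \<in> {ys. length ys = Suc r}"
    then show "fst (butlast ys, last ys) @ [snd (butlast ys, last ys)] = ys"
      by (cases ys rule: rev_cases) auto
  qed (auto, metis append_butlast_last_id Zero_not_Suc list.size(3))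
  also have "\<dots> = (\<Sum>xs\<in>{xs. length xs = r}. \<Sum>j\<in>UNIV. f (xs @ [j]))"
    by (simp only: sum.cartesian_product split_def)
  finally show ?thesis .
qed

lemma vpow_Suc:
  "vpow T (Suc r) q v = (\<Sum>xs\<in>{xs. length xs = r}. \<Sum>j\<in>UNIV. T q (xs @ [j]) * pv v xs * v $ j)"
  unfolding vpow_def by (subst sum_len_Suc) (simp add: mult.assoc)

lemma pv_mset: "mset xs = mset ys \<Longrightarrow> pv v xs = pv v ys"
  by (metis mset_map prod_mset_prod_list)

lemma vpow_symz: "vpow (symz T) r q v = vpow T r q v"
proof -
  let ?P = "{\<sigma>. \<sigma> permutes {..<r}}"
  let ?L = "{xs::'a list. length xs = r}"
  have fin: "finite ?P" by (rule finite_permutations) simp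
  have each: "(\<Sum>xs\<in>?L. T q (permute_list \<sigma> xs) * pv v xs) = vpow T r q v" if s: "\<sigma> permutes {..<r}" for \<sigma>
    unfolding vpow_def
  proof (rule sum.reindex_bij_witness[where i="permute_list (inv \<sigma>)" and j="permute_list \<sigma>"])
    have si: "inv \<sigma> permutes {..<r}" using s by (rule permutes_inv)
    fix xs assume xs: "xs \<in> ?L"
    show "permute_list (inv \<sigma>) (permute_list \<sigma> xs) = xs"
      using xs permute_list_compose[of "inv \<sigma>" xs \<sigma>] si permutes_inv_o(1)[OF s] by simp
    show "permute_list \<sigma> xs \<in> ?L" using xs by simp
    show "T q (permute_list \<sigma> xs) * pv v (permute_list \<sigma> xs) = T q (permute_list \<sigma> xs) * pv v xs"
    proof -
      have "\<sigma> permutes {..<length xs}" using xs s by simp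
      then have "mset (permute_list \<sigma> xs) = mset xs" by (rule mset_permute_list)
      then show ?thesis by (metis pv_mset)
    qed
  next
    have si: "inv \<sigma> permutes {..<r}" using s by (rule permutes_inv)
    fix ys assume ys: "ys \<in> ?L"
    show "permute_list \<sigma> (permute_list (inv \<sigma>) ys) = ys"
      using ys permute_list_compose[of \<sigma> ys "inv \<sigma>"] s permutes_inv_o(2)[OF s] by simp
    show "permute_list (inv \<sigma>) ys \<in> ?L" using ys by simp
  qed
  have "vpow (symz T) r q v = (\<Sum>xs\<in>?L. (\<Sum>\<sigma>\<in>?P. T q (permute_list \<sigma> xs) * pv v xs)) / fact r"
    unfolding vpow_def symz_def
    by (simp add: sum_divide_distrib sum_distrib_right permute_list_def)
  also have "\<dots> = (\<Sum>\<sigma>\<in>?P. \<Sum>xs\<in>?L. T q (permute_list \<sigma> xs) * pv v xs) / fact r"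
    by (subst sum.swap) simp
  also have "\<dots> = (\<Sum>\<sigma>\<in>?P. vpow T r q v) / fact r"
    by (simp add: each)
  also have "\<dots> = vpow T r q v"
    using card_permutations[of "{..<r}" r] by simp
  finally show ?thesis .
qed



definition omit :: "nat \<Rightarrow> 'a list \<Rightarrow> 'a list" where
  "omit p xs = take p xs @ drop (Suc p) xs"

lemma length_omit: "p < length xs \<Longrightarrow> length (omit p xs) = length xs - 1"
  by (simp add: omit_def)

lemma omit_update: "p < length xs \<Longrightarrow> omit p (xs[p:=c]) = omit p xs"
  by (simp add: omit_def)

lemma pv_omit: "p < length xs \<Longrightarrow> pv w xs = w $ (xs!p) * pv w (omit p xs)"
proof -
  assume p: "p < length xs"
  have "xs = take p xs @ xs!p # drop (Suc p) xs" using p by (simp add: id_take_nth_drop)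
  then have "pv w xs = pv w (take p xs @ xs!p # drop (Suc p) xs)" by simp
  then show ?thesis by (simp add: omit_def)
qed

lemma mset_omit: "p < length xs \<Longrightarrow> mset xs = mset (omit p xs @ [xs!p])"
proof -
  assume p: "p < length xs"
  have "xs = take p xs @ xs!p # drop (Suc p) xs" using p by (simp add: id_take_nth_drop)
  then have "mset xs = mset (take p xs @ xs!p # drop (Suc p) xs)" by simp
  then show ?thesis by (simp add: omit_def)
qed

lemma B_eq:
  fixes \<Gamma> :: "'n::finite \<Rightarrow> 'n \<Rightarrow> 'n \<Rightarrow> real" and T :: "'n list \<Rightarrow> real"
  assumes p: "p < r"
  shows "(\<Sum>xs\<in>{xs. length xs = r}. \<Sum>j\<in>UNIV. \<Sum>c\<in>UNIV. \<Gamma> c j (xs!p) * T (xs[p:=c]) * pv w xs * w$j)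
       = (\<Sum>xs\<in>{xs. length xs = r}. T xs * (\<Sum>b\<in>UNIV. \<Sum>c\<in>UNIV. \<Gamma> (xs!p) b c * w$b * w$c) * pv w (omit p xs))"
proof -
  let ?L = "{xs::'n list. length xs = r}"
  define F where "F ys b = (\<Sum>j\<in>UNIV. \<Gamma> (ys!p) j b * w$j * w$b * T ys * pv w (omit p ys))" for ys b
  have "(\<Sum>xs\<in>?L. \<Sum>j\<in>UNIV. \<Sum>c\<in>UNIV. \<Gamma> c j (xs!p) * T (xs[p:=c]) * pv w xs * w$j)
      = (\<Sum>xs\<in>?L. \<Sum>c\<in>UNIV. F (xs[p:=c]) (xs!p))"
  proof (rule sum.cong[OF refl])
    fix xs assume "xs \<in> ?L"
    then have px: "p < length xs" using p by simp
    have "(\<Sum>j\<in>UNIV. \<Sum>c\<in>UNIV. \<Gamma> c j (xs!p) * T (xs[p:=c]) * pv w xs * w$j)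
        = (\<Sum>c\<in>UNIV. \<Sum>j\<in>UNIV. \<Gamma> c j (xs!p) * T (xs[p:=c]) * pv w xs * w$j)"
      by (rule sum.swap)
    also have "\<dots> = (\<Sum>c\<in>UNIV. F (xs[p:=c]) (xs!p))"
      unfolding F_def
      by (intro sum.cong refl) (simp add: pv_omit[OF px, of w] omit_update[OF px] px mult_ac)
    finally show "(\<Sum>j\<in>UNIV. \<Sum>c\<in>UNIV. \<Gamma> c j (xs!p) * T (xs[p:=c]) * pv w xs * w$j)
        = (\<Sum>c\<in>UNIV. F (xs[p:=c]) (xs!p))" .
  qed
  also have "\<dots> = (\<Sum>z\<in>?L \<times> UNIV. F ((fst z)[p:=snd z]) (fst z!p))"
    by (simp only: sum.cartesian_product split_def)
  also have "\<dots> = (\<Sum>z\<in>?L \<times> UNIV. F (fst z) (snd z))"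
    by (rule sum.reindex_bij_witness[where i="\<lambda>z. ((fst z)[p:=snd z], fst z!p)" and j="\<lambda>z. ((fst z)[p:=snd z], fst z!p)"])
       (use p in auto)
  also have "\<dots> = (\<Sum>ys\<in>?L. \<Sum>b\<in>UNIV. F ys b)"
    by (simp only: sum.cartesian_product split_def)
  also have "\<dots> = (\<Sum>xs\<in>?L. T xs * (\<Sum>b\<in>UNIV. \<Sum>c\<in>UNIV. \<Gamma> (xs!p) b c * w$b * w$c) * pv w (omit p xs))"
    unfolding F_def
    by (intro sum.cong refl, subst sum.swap)
       (simp add: sum_distrib_left sum_distrib_right mult_ac)
  finally show ?thesis .
qed

lemma C_eq:
  fixes T :: "'n::finite list \<Rightarrow> real" and Qv :: "real^'n"
  assumes p: "p < r"
    and sym: "\<And>xs ys. length xs = r \<Longrightarrow> mset xs = mset ys \<Longrightarrow> T xs = T ys"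
  shows "(\<Sum>xs\<in>{xs. length xs = r}. T xs * Qv $ (xs!p) * pv w (omit p xs))
       = (\<Sum>ys\<in>{ys. length ys = r - 1}. (\<Sum>c\<in>UNIV. T (ys @ [c]) * Qv $ c) * pv w ys)"
proof -
  let ?L = "{xs::'n list. length xs = r}"
  let ?M = "{xs::'n list. length xs = r - 1}"
  have "(\<Sum>ys\<in>?M. (\<Sum>c\<in>UNIV. T (ys @ [c]) * Qv $ c) * pv w ys)
      = (\<Sum>z\<in>?M \<times> UNIV. T (fst z @ [snd z]) * Qv $ snd z * pv w (fst z))"
    by (simp only: sum.cartesian_product split_def sum_distrib_right)
  also have "\<dots> = (\<Sum>xs\<in>?L. T xs * Qv $ (xs!p) * pv w (omit p xs))"
  proof (rule sum.reindex_bij_witness[where i="\<lambda>xs. (omit p xs, xs!p)" and j="\<lambda>z. take p (fst z) @ snd z # drop p (fst z)"])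
    fix z :: "'n list \<times> 'n" assume z: "z \<in> ?M \<times> UNIV"
    then have lz: "length (fst z) = r - 1" by auto
    show "(omit p (take p (fst z) @ snd z # drop p (fst z)), (take p (fst z) @ snd z # drop p (fst z)) ! p) = z"
      using lz p by (cases z) (auto simp: omit_def nth_append min_def)
    show "take p (fst z) @ snd z # drop p (fst z) \<in> ?L" using lz p by auto
    show "T (take p (fst z) @ snd z # drop p (fst z)) * Qv $ ((take p (fst z) @ snd z # drop p (fst z)) ! p) *
          pv w (omit p (take p (fst z) @ snd z # drop p (fst z))) = T (fst z @ [snd z]) * Qv $ snd z * pv w (fst z)"
    proof -
      have o: "omit p (take p (fst z) @ snd z # drop p (fst z)) = fst z" using lz p by (auto simp: omit_def min_def)
      have nn: "(take p (fst z) @ snd z # drop p (fst z)) ! p = snd z" using lz p by (auto simp: nth_append min_def)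
      have "T (take p (fst z) @ snd z # drop p (fst z)) = T (fst z @ [snd z])"
        by (rule sym) (use lz p in \<open>auto, metis append_take_drop_id mset_append\<close>)
      then show ?thesis using o nn by simp
    qed
  next
    fix xs :: "'n list" assume xs: "xs \<in> ?L"
    then have lx: "length xs = r" by simp
    show "take p (fst (omit p xs, xs ! p)) @ snd (omit p xs, xs ! p) # drop p (fst (omit p xs, xs ! p)) = xs"
      using lx p by (simp add: omit_def min_def id_take_nth_drop[symmetric])
    show "(omit p xs, xs ! p) \<in> ?M \<times> UNIV" using lx p by (simp add: length_omit)
  qed
  finally show ?thesis by simp
qed



lemma vnth_deriv:
  assumes "(v has_vector_derivative w) (at t)"
  shows "((\<lambda>\<tau>. v \<tau> $ i) has_real_derivative w $ i) (at t)"
proof -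
  have "(v has_derivative (\<lambda>h. h *\<^sub>R w)) (at t)" using assms by (simp add: has_vector_derivative_def)
  then have "((\<lambda>\<tau>. v \<tau> $ i) has_derivative (\<lambda>h. (h *\<^sub>R w) $ i)) (at t)"
    by (rule bounded_linear.has_derivative[OF bounded_linear_vec_nth])
  then show ?thesis
    by (rule has_derivative_imp_has_field_derivative) (simp add: mult.commute)
qed

lemma pv_deriv:
  assumes "\<And>i. ((\<lambda>\<tau>. v \<tau> $ i) has_real_derivative a $ i) (at t)"
  shows "((\<lambda>\<tau>. pv (v \<tau>) xs) has_real_derivative (\<Sum>p<length xs. a $ (xs!p) * pv (v t) (omit p xs))) (at t)"
proof (induction xs)
  case Nil
  then show ?case by simp
next
  case (Cons x xs)
  have "((\<lambda>\<tau>. v \<tau> $ x * pv (v \<tau>) xs) has_real_derivative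
        (a $ x * pv (v t) xs + v t $ x * (\<Sum>p<length xs. a $ (xs!p) * pv (v t) (omit p xs)))) (at t)"
    using DERIV_mult[OF assms[of x] Cons] by (simp add: mult.commute)
  moreover have "(\<Sum>p<length (x#xs). a $ ((x#xs)!p) * pv (v t) (omit p (x#xs)))
     = a $ x * pv (v t) xs + v t $ x * (\<Sum>p<length xs. a $ (xs!p) * pv (v t) (omit p xs))"
    by (simp add: sum.lessThan_Suc_shift omit_def sum_distrib_left mult_ac del: sum.lessThan_Suc)
  ultimately show ?case by simp
qed

lemma chain_pd:
  assumes f: "f differentiable (at (x t))" and x: "(x has_vector_derivative w) (at t)"
  shows "((\<lambda>\<tau>. f (x \<tau>)) has_real_derivative (\<Sum>j\<in>UNIV. pd f j (x t) * w $ j)) (at t)"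
proof -
  let ?F = "frechet_derivative f (at (x t))"
  have F: "(f has_derivative ?F) (at (x t))" using f by (simp add: frechet_derivative_works)
  have lin: "linear ?F" using f by (rule linear_frechet_derivative)
  have xd: "(x has_derivative (\<lambda>h. h *\<^sub>R w)) (at t)" using x by (simp add: has_vector_derivative_def)
  have "((\<lambda>\<tau>. f (x \<tau>)) has_derivative (\<lambda>h. ?F (h *\<^sub>R w))) (at t)"
    using has_derivative_compose[OF xd F] .
  moreover have "?F (h *\<^sub>R w) = h * (\<Sum>j\<in>UNIV. pd f j (x t) * w $ j)" for h
  proof -
    have sc: "?F (h *\<^sub>R w) = h * ?F w" using linear_scale[OF lin] by simp
    have we: "w = (\<Sum>j\<in>UNIV. w $ j *\<^sub>R axis j 1)"
      using basis_expansion[of w] by (simp add: scalar_mult_eq_scaleR)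
    have "?F (\<Sum>j\<in>UNIV. w $ j *\<^sub>R axis j 1) = (\<Sum>j\<in>UNIV. ?F (w $ j *\<^sub>R axis j 1))"
      by (rule linear_sum[OF lin])
    also have "\<dots> = (\<Sum>j\<in>UNIV. w $ j * ?F (axis j 1))"
      using linear_scale[OF lin] by simp
    finally have "?F w = (\<Sum>j\<in>UNIV. w $ j * ?F (axis j 1))" using we by simp
    then show ?thesis using sc by (simp add: pd_def mult.commute)
  qed
  ultimately show ?thesis
    by (intro has_derivative_imp_has_field_derivative) (auto simp: mult.commute)
qed



lemma vpow_deriv:
  fixes g :: "real^'n \<Rightarrow> real^'n^'n" and Q :: "real^'n \<Rightarrow> real^'n" and T :: "'n tensor"
  assumes xd: "(x has_vector_derivative v t) (at t)"
    and vd: "(v has_vector_derivative a) (at t)"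
    and acc: "\<And>i. a $ i = - (\<Sum>b\<in>UNIV. \<Sum>c\<in>UNIV. christ g i b c (x t) * v t $ b * v t $ c) - Q (x t) $ i"
    and dT: "\<And>xs. length xs = r \<Longrightarrow> (\<lambda>q. T q xs) differentiable (at (x t))"
    and sT: "\<And>xs ys. length xs = r \<Longrightarrow> mset xs = mset ys \<Longrightarrow> T (x t) xs = T (x t) ys"
  shows "((\<lambda>\<tau>. vpow T r (x \<tau>) (v \<tau>)) has_real_derivative
     (vpow (covd g T) (Suc r) (x t) (v t) - real r * vpow (contr T Q) (r - 1) (x t) (v t))) (at t)"
proof -
  define q where "q = x t"
  define w where "w = v t"
  let ?L = "{xs::'n list. length xs = r}"
  define \<Gamma> where "\<Gamma> c j b = christ g c j b q" for c j b
  define GG where "GG i = (\<Sum>b\<in>UNIV. \<Sum>c\<in>UNIV. christ g i b c q * w $ b * w $ c)" for i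
  have acc': "a $ i = - GG i - Q q $ i" for i using acc unfolding GG_def q_def w_def by simp
  have d1: "((\<lambda>\<tau>. vpow T r (x \<tau>) (v \<tau>)) has_real_derivative
     (\<Sum>xs\<in>?L. (\<Sum>j\<in>UNIV. pd (\<lambda>q. T q xs) j q * w$j) * pv w xs + T q xs * (\<Sum>p<r. a$(xs!p) * pv w (omit p xs)))) (at t)"
    unfolding vpow_def
  proof (rule DERIV_sum)
    fix xs assume xs: "xs \<in> ?L"
    have a: "((\<lambda>\<tau>. T (x \<tau>) xs) has_real_derivative (\<Sum>j\<in>UNIV. pd (\<lambda>q. T q xs) j q * w$j)) (at t)"
      unfolding q_def w_def by (rule chain_pd[OF dT xd]) (use xs in simp)
    have b: "((\<lambda>\<tau>. pv (v \<tau>) xs) has_real_derivative (\<Sum>p<r. a$(xs!p) * pv w (omit p xs))) (at t)"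
      using pv_deriv[of v a t xs, OF vnth_deriv[OF vd]] xs unfolding w_def by simp
    show "((\<lambda>\<tau>. T (x \<tau>) xs * pv (v \<tau>) xs) has_real_derivative
        (\<Sum>j\<in>UNIV. pd (\<lambda>q. T q xs) j q * w$j) * pv w xs + T q xs * (\<Sum>p<r. a$(xs!p) * pv w (omit p xs))) (at t)"
      by (rule DERIV_cong[OF DERIV_mult[OF a b]]) (simp add: q_def w_def mult.commute)
  qed
  have cov: "covd g T q (xs @ [j]) = pd (\<lambda>p. T p xs) j q - (\<Sum>p<length xs. \<Sum>c\<in>UNIV. \<Gamma> c j (xs!p) * T q (xs[p:=c]))" for xs j
    unfolding covd_def \<Gamma>_def by simp
  define A1 where "A1 = (\<Sum>xs\<in>?L. \<Sum>j\<in>UNIV. pd (\<lambda>p. T p xs) j q * pv w xs * w$j)"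
  define Bp where "Bp p = (\<Sum>xs\<in>?L. \<Sum>j\<in>UNIV. \<Sum>c\<in>UNIV. \<Gamma> c j (xs!p) * T q (xs[p:=c]) * pv w xs * w$j)" for p
  have V1: "vpow (covd g T) (Suc r) q w = A1 - (\<Sum>p<r. Bp p)"
  proof -
    have "vpow (covd g T) (Suc r) q w = (\<Sum>xs\<in>?L. \<Sum>j\<in>UNIV. covd g T q (xs @ [j]) * pv w xs * w $ j)"
      by (rule vpow_Suc)
    also have "\<dots> = (\<Sum>xs\<in>?L. \<Sum>j\<in>UNIV. pd (\<lambda>p. T p xs) j q * pv w xs * w$j
                  - (\<Sum>p<r. \<Sum>c\<in>UNIV. \<Gamma> c j (xs!p) * T q (xs[p:=c]) * pv w xs * w$j))"
      by (intro sum.cong refl) (simp add: cov left_diff_distrib sum_distrib_right)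
    also have "\<dots> = A1 - (\<Sum>xs\<in>?L. \<Sum>j\<in>UNIV. \<Sum>p<r. \<Sum>c\<in>UNIV. \<Gamma> c j (xs!p) * T q (xs[p:=c]) * pv w xs * w$j)"
      unfolding A1_def by (simp add: sum_subtractf)
    also have "(\<Sum>xs\<in>?L. \<Sum>j\<in>UNIV. \<Sum>p<r. \<Sum>c\<in>UNIV. \<Gamma> c j (xs!p) * T q (xs[p:=c]) * pv w xs * w$j) = (\<Sum>p<r. Bp p)"
      unfolding Bp_def
      by (subst sum.swap, subst (2) sum.swap, rule refl)
    finally show ?thesis .
  qed
  have BB: "Bp p = (\<Sum>xs\<in>?L. T q xs * GG (xs!p) * pv w (omit p xs))" if p: "p < r" for p
    unfolding Bp_def GG_def \<Gamma>_def using B_eq[OF p, of "\<lambda>c j b. christ g c j b q" "T q" w] by simp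
  have CC: "(\<Sum>xs\<in>?L. T q xs * Q q $ (xs!p) * pv w (omit p xs)) = vpow (contr T Q) (r - 1) q w"
    if p: "p < r" for p
    unfolding vpow_def contr_def
    by (rule C_eq[OF p]) (use sT in \<open>simp add: q_def\<close>)
  have second: "(\<Sum>xs\<in>?L. T q xs * (\<Sum>p<r. a$(xs!p) * pv w (omit p xs)))
      = - (\<Sum>p<r. Bp p) - real r * vpow (contr T Q) (r - 1) q w"
  proof -
    have "(\<Sum>xs\<in>?L. T q xs * (\<Sum>p<r. a$(xs!p) * pv w (omit p xs)))
        = (\<Sum>p<r. \<Sum>xs\<in>?L. - (T q xs * GG (xs!p) * pv w (omit p xs)) - T q xs * Q q $ (xs!p) * pv w (omit p xs))"
      by (subst sum.swap) (simp add: sum_distrib_left acc' algebra_simps)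
    also have "\<dots> = (\<Sum>p<r. - Bp p - vpow (contr T Q) (r - 1) q w)"
      by (intro sum.cong refl) (simp add: sum_subtractf sum_negf BB CC)
    also have "\<dots> = - (\<Sum>p<r. Bp p) - real r * vpow (contr T Q) (r - 1) q w"
      by (simp add: sum_subtractf sum_negf)
    finally show ?thesis .
  qed
  have first: "(\<Sum>xs\<in>?L. (\<Sum>j\<in>UNIV. pd (\<lambda>q. T q xs) j q * w$j) * pv w xs) = A1"
    unfolding A1_def by (intro sum.cong refl) (simp only: sum_distrib_right, simp add: mult_ac)
  have "(\<Sum>xs\<in>?L. (\<Sum>j\<in>UNIV. pd (\<lambda>q. T q xs) j q * w$j) * pv w xs + T q xs * (\<Sum>p<r. a$(xs!p) * pv w (omit p xs)))
     = vpow (covd g T) (Suc r) q w - real r * vpow (contr T Q) (r - 1) q w"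
    using first second V1 by (simp add: sum.distrib)
  with d1 show ?thesis unfolding q_def w_def by simp
qed



lemma smooth_diff: "smooth_on U f \<Longrightarrow> q \<in> U \<Longrightarrow> f differentiable (at q)"
  unfolding smooth_on_def by (metis Ck.simps(2))

lemma smooth_pd: "smooth_on U f \<Longrightarrow> smooth_on U (pd f i)"
  unfolding smooth_on_def by (metis Ck.simps(2))

lemma differentiable_prod':
  fixes f :: "'i \<Rightarrow> 'a::real_normed_vector \<Rightarrow> real"
  assumes "finite I" "\<And>i. i \<in> I \<Longrightarrow> f i differentiable (at q)"
  shows "(\<lambda>x. \<Prod>i\<in>I. f i x) differentiable (at q)"
  using assms by (induction I rule: finite_induct) auto

lemma det_differentiable:
  fixes f :: "'n::finite \<Rightarrow> 'n \<Rightarrow> real^'m \<Rightarrow> real"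
  assumes "\<And>i j. f i j differentiable (at q)"
  shows "(\<lambda>p. det (\<chi> i j. f i j p)) differentiable (at q)"
  unfolding det_def
  by (intro ballI differentiable_sum differentiable_mult differentiable_const differentiable_prod')
     (auto intro: assms finite_permutations)

lemma matrix_inv_cramer:
  fixes A :: "real^'n^'n"
  assumes "invertible A"
  shows "matrix_inv A $ a $ d = det (\<chi> i j. if j = a then axis d 1 $ i else A $ i $ j) / det A"
proof -
  have AB: "A ** matrix_inv A = mat 1"
    using assms unfolding invertible_def matrix_inv_def by (metis (mono_tags, lifting) someI_ex)
  have dA: "det A \<noteq> 0" using assms by (simp add: invertible_det_nz)
  have "A *v (matrix_inv A *v axis d 1) = axis d 1"
    by (simp add: matrix_vector_mul_assoc AB)
  then have "matrix_inv A *v axis d 1 = (\<chi> k. det(\<chi> i j. if j=k then axis d 1 $ i else A$i$j) / det A)"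
    using cramer[OF dA] by blast
  then have "(matrix_inv A *v axis d 1) $ a = det (\<chi> i j. if j = a then axis d 1 $ i else A $ i $ j) / det A"
    by simp
  moreover have "(matrix_inv A *v axis d 1) $ a = matrix_inv A $ a $ d"
    by (simp add: matrix_vector_mult_def axis_def if_distrib cong: if_cong)
  ultimately show ?thesis by simp
qed

lemma matrix_inv_diff:
  fixes g :: "real^'n \<Rightarrow> real^'n^'n"
  assumes U: "open U" and q: "q \<in> U"
    and gs: "\<And>a b. smooth_on U (\<lambda>q. g q $ a $ b)"
    and gi: "\<And>q. q \<in> U \<Longrightarrow> invertible (g q)"
  shows "(\<lambda>p. matrix_inv (g p) $ a $ d) differentiable (at q)"
proof -
  let ?h = "\<lambda>p. det (\<chi> i j. if j = a then axis d 1 $ i else g p $ i $ j) / det (\<chi> i j. g p $ i $ j)"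
  have gd: "(\<lambda>p. g p $ i $ j) differentiable (at q)" for i j by (rule smooth_diff[OF gs q])
  have "?h differentiable (at q)"
  proof (rule differentiable_divide)
    show "(\<lambda>p. det (\<chi> i j. if j = a then axis d 1 $ i else g p $ i $ j)) differentiable (at q)"
      by (rule det_differentiable) (case_tac "j = a", auto intro: gd)
    show "(\<lambda>p. det (\<chi> i j. g p $ i $ j)) differentiable (at q)"
      by (rule det_differentiable) (auto intro: gd)
    have "(\<chi> i j. g q $ i $ j) = g q" by (simp add: vec_eq_iff)
    then show "det (\<chi> i j. g q $ i $ j) \<noteq> 0" using gi[OF q] by (simp add: invertible_det_nz)
  qed
  then obtain D where D: "(?h has_derivative D) (at q)" by (auto simp: differentiable_def)
  have "((\<lambda>p. matrix_inv (g p) $ a $ d) has_derivative D) (at q)"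
  proof (rule has_derivative_transform_within_open[OF D U q])
    fix p assume p: "p \<in> U"
    have "(\<chi> i j. g p $ i $ j) = g p" by (simp add: vec_eq_iff)
    then show "?h p = matrix_inv (g p) $ a $ d" using matrix_inv_cramer[OF gi[OF p]] by simp
  qed
  then show ?thesis by (auto simp: differentiable_def)
qed

lemma christ_diff:
  fixes g :: "real^'n \<Rightarrow> real^'n^'n"
  assumes U: "open U" and q: "q \<in> U"
    and gs: "\<And>a b. smooth_on U (\<lambda>q. g q $ a $ b)"
    and gi: "\<And>q. q \<in> U \<Longrightarrow> invertible (g q)"
  shows "(\<lambda>p. christ g a b c p) differentiable (at q)"
proof -
  have pdd: "pd (\<lambda>p. g p $ i $ j) k differentiable (at q)" for i j k
    by (rule smooth_diff[OF smooth_pd[OF gs] q])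
  have md: "(\<lambda>x. matrix_inv (g x) $ a $ d *
      (pd (\<lambda>p. g p $ d $ b) c x + pd (\<lambda>p. g p $ d $ c) b x - pd (\<lambda>p. g p $ b $ c) d x)) differentiable (at q)" for d
    by (rule differentiable_mult[OF matrix_inv_diff[OF U q gs gi]]; auto intro!: differentiable_add differentiable_diff pdd)
  show ?thesis unfolding christ_def
    by (rule differentiable_mult[OF differentiable_const], rule differentiable_sum) (auto intro: md)
qed

lemma covd_diff:
  fixes g :: "real^'n \<Rightarrow> real^'n^'n" and T :: "'n tensor"
  assumes U: "open U" and q: "q \<in> U"
    and gs: "\<And>a b. smooth_on U (\<lambda>q. g q $ a $ b)"
    and gi: "\<And>q. q \<in> U \<Longrightarrow> invertible (g q)"
    and Ts: "\<And>xs. length xs = r \<Longrightarrow> smooth_on U (\<lambda>q. T q xs)"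
    and ys: "length ys = Suc r"
  shows "(\<lambda>p. covd g T p ys) differentiable (at q)"
proof -
  have lb: "length (butlast ys) = r" using ys by simp
  have cm: "(\<lambda>x. christ g c j b x * T x zs) differentiable (at q)" if "length zs = r" for c j b zs
    by (rule differentiable_mult[OF christ_diff[OF U q gs gi] smooth_diff[OF Ts[OF that] q]])
  have pt: "(\<lambda>x. pd (\<lambda>p. T p (butlast ys)) (last ys) x) differentiable (at q)"
    by (rule smooth_diff[OF smooth_pd[OF Ts[OF lb]] q])
  show ?thesis unfolding covd_def Let_def
    by (rule differentiable_diff[OF pt], rule differentiable_sum, simp, rule ballI, rule differentiable_sum)
       (auto intro!: cm simp: lb ys)
qed

lemma symz_diff:
  assumes "\<And>xs. length xs = r \<Longrightarrow> (\<lambda>p. T p xs) differentiable (at q)"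
    and "length ys = r"
  shows "(\<lambda>p. symz T p ys) differentiable (at q)"
  unfolding symz_def
  by (rule differentiable_divide, rule differentiable_sum)
     (auto intro!: assms(1) finite_permutations simp: assms(2))



lemma cutn: "(\<Sum>k=0..n. (\<tau>::real)^k * (if k<n then h k else 0)) = (\<Sum>k<n. \<tau>^k * h k)"
proof -
  have "{0..n} = insert n {..<n}" by auto
  then show ?thesis by (simp add: sum.insert)
qed

lemma shiftA: "(\<Sum>k=1..n. (\<tau>::real)^(k-1) * f (k-1)) = (\<Sum>k=0..n. \<tau>^k * (if k<n then f k else 0))"
  unfolding cutn by (induction n) (auto simp: sum.atLeast0_atMost_Suc)

lemma shiftB: "(\<Sum>k=0..n. real k * (\<tau>::real)^(k-1) * f k) = (\<Sum>k=0..n. \<tau>^k * (if k<n then real (k+1) * f (k+1) else 0))"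
  unfolding cutn by (induction n) (auto simp: sum.atLeast0_atMost_Suc)

lemma shiftC: "(\<Sum>k=1..n. (\<tau>::real)^k / real k * f (k-1)) = (\<Sum>k=0..n. \<tau>^k * (if 1\<le>k then f (k-1) / real k else 0))"
  by (induction n) (auto simp: sum.atLeast0_atMost_Suc)

lemma telD: "(\<Sum>r=2..d+1. (f::nat\<Rightarrow>real) r) = (\<Sum>r=2..d+1. f (r-1)) - f 1 + f (d+1)"
  by (induction d) (auto simp: sum.atLeast_Suc_atMost_Suc_shift numeral_2_eq_2)

lemma telR: "(\<Sum>r=2..d+1. (f::nat\<Rightarrow>real) r) = (\<Sum>r=2..d+1. f (r+1)) + f 2 - f (d+2)"
  by (induction d) (auto simp: sum.atLeast_Suc_atMost_Suc_shift numeral_2_eq_2)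

lemma Ek_zero:
  fixes P D R :: "nat \<Rightarrow> nat \<Rightarrow> real" and cS cK :: "nat \<Rightarrow> real" and cC cG s :: real and m n k :: nat
  assumes m: "m \<ge> 3" and n: "n \<ge> 1"
    and h1: "D n (m-2) = - (real m / real n) * cS (n-1)"
    and h2: "\<And>k. 2 \<le> k \<Longrightarrow> k \<le> n \<Longrightarrow> D (k-1) (m-2) = - (real m / real (k-1)) * cS (k-2) - real k * P k (m-1)"
    and h3: "D 0 (m-2) = real m * cC - P 1 (m-1)"
    and h4: "\<And>r. 2 \<le> r \<Longrightarrow> r \<le> m-2 \<Longrightarrow> D n (r-1) = real (r+1) * R n (r+1)"
    and h5: "\<And>k r. 1 \<le> k \<Longrightarrow> k \<le> n \<Longrightarrow> 2 \<le> r \<Longrightarrow> r \<le> m-2 \<Longrightarrow> D (k-1) (r-1) = real (r+1) * R (k-1) (r+1) - real k * P k r"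
    and h6: "cK (n-1) = 2 * real n * R n 2"
    and h7: "\<And>k. 2 \<le> k \<Longrightarrow> k \<le> n \<Longrightarrow> cK (k-2) = 2 * real (k-1) * R (k-1) 2 - real k * real (k-1) * P k 1"
    and h8: "cG = 2 * R 0 2 - P 1 1"
    and h9: "R n 1 = s"
    and h10: "D n (m-1) = 0"
    and k: "k \<le> n"
  shows "(if k=0 then cG - real m * cC else 0) - (if k<n then D k (m-1) else 0)
     + (if 1\<le>k then real m * cS (k-1) / real k else 0)
     + (\<Sum>r=1..m-1. (if k<n then real (k+1) * P (k+1) r else 0) + D k r - real r * R k r)
     + (if k=n then s else 0) + (if k<n then R k 1 else 0) + (if 1\<le>k then cK (k-1) / real k else 0) = 0"
proof -
  define A where "A r = (if k<n then real (k+1) * P (k+1) r else 0)" for r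
  obtain d where d: "m = d + 3" using m by (metis add.commute le_Suc_ex)
  have split1: "{1..m-1} = {1} \<union> {2..d+1} \<union> {m-1}" using d by auto
  have sumf: "(\<Sum>r=1..m-1. f r) = f 1 + (\<Sum>r=2..d+1. f r) + f (m-1)" for f :: "nat \<Rightarrow> real"
    unfolding split1 using d by (subst sum.union_disjoint; auto)+
  have mid: "(\<Sum>r=2..d+1. A r + D k (r-1) - real (r+1) * R k (r+1)) = 0"
  proof (rule sum.neutral, intro ballI)
    fix r assume r: "r \<in> {2..d+1}"
    show "A r + D k (r-1) - real (r+1) * R k (r+1) = 0"
    proof (cases "k < n")
      case True
      have "D (Suc k - 1) (r-1) = real (r+1) * R (Suc k - 1) (r+1) - real (Suc k) * P (Suc k) r"
        using h5[of "Suc k" r] True r d by auto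
      then show ?thesis using True by (simp add: A_def)
    next
      case False
      then have "k = n" using k by simp
      then show ?thesis using h4[of r] r d by (simp add: A_def)
    qed
  qed
  have S: "(\<Sum>r=1..m-1. A r + D k r - real r * R k r)
      = A 1 + A (m-1) + D k (m-1) + D k (m-2) - R k 1 - 2 * R k 2"
  proof -
    have "(\<Sum>r=1..m-1. A r + D k r - real r * R k r)
        = (A 1 + D k 1 - R k 1) + ((\<Sum>r=2..d+1. A r) + (\<Sum>r=2..d+1. D k r) - (\<Sum>r=2..d+1. real r * R k r))
          + (A (m-1) + D k (m-1) - real (m-1) * R k (m-1))"
      by (subst sumf) (simp add: sum.distrib sum_subtractf)
    also have "(\<Sum>r=2..d+1. D k r) = (\<Sum>r=2..d+1. D k (r-1)) - D k 1 + D k (d+1)"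
      by (rule telD)
    also have "(\<Sum>r=2..d+1. real r * R k r) = (\<Sum>r=2..d+1. real (r+1) * R k (r+1)) + real 2 * R k 2 - real (d+2) * R k (d+2)"
      by (rule telR[where f="\<lambda>r. real r * R k r"])
    finally show ?thesis using mid d
      by (simp add: sum.distrib sum_subtractf algebra_simps numeral_2_eq_2 numeral_3_eq_3)
  qed
  show ?thesis
  proof (cases "k = 0")
    case True
    then show ?thesis using S h3 h8 n by (simp add: A_def)
  next
    case False
    show ?thesis
    proof (cases "k < n")
      case True
      have e2: "D k (m-2) = - (real m / real k) * cS (k-1) - real (Suc k) * P (Suc k) (m-1)"
        using h2[of "Suc k"] True False by simp
      have e7: "cK (k-1) = 2 * real k * R k 2 - real (Suc k) * real k * P (Suc k) 1"
        using h7[of "Suc k"] True False by simp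
      have kk: "real k \<noteq> 0" using False by simp
      show ?thesis using S e2 e7 True False kk by (simp add: A_def field_simps)
    next
      case F2: False
      then have kn: "k = n" using k by simp
      have kk: "real n \<noteq> 0" using n by simp
      show ?thesis using S h1 h6 h9 h10 kn kk False by (simp add: A_def field_simps)
    qed
  qed
qed

lemma main_alg:
  fixes P D R :: "nat \<Rightarrow> nat \<Rightarrow> real" and cS cK :: "nat \<Rightarrow> real" and cC cG s t :: real and m n :: nat
  assumes m: "m \<ge> 3" and n: "n \<ge> 1"
    and h1: "D n (m-2) = - (real m / real n) * cS (n-1)"
    and h2: "\<And>k. 2 \<le> k \<Longrightarrow> k \<le> n \<Longrightarrow> D (k-1) (m-2) = - (real m / real (k-1)) * cS (k-2) - real k * P k (m-1)"
    and h3: "D 0 (m-2) = real m * cC - P 1 (m-1)"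
    and h4: "\<And>r. 2 \<le> r \<Longrightarrow> r \<le> m-2 \<Longrightarrow> D n (r-1) = real (r+1) * R n (r+1)"
    and h5: "\<And>k r. 1 \<le> k \<Longrightarrow> k \<le> n \<Longrightarrow> 2 \<le> r \<Longrightarrow> r \<le> m-2 \<Longrightarrow> D (k-1) (r-1) = real (r+1) * R (k-1) (r+1) - real k * P k r"
    and h6: "cK (n-1) = 2 * real n * R n 2"
    and h7: "\<And>k. 2 \<le> k \<Longrightarrow> k \<le> n \<Longrightarrow> cK (k-2) = 2 * real (k-1) * R (k-1) 2 - real k * real (k-1) * P k 1"
    and h8: "cG = 2 * R 0 2 - P 1 1"
    and h9: "R n 1 = s"
    and h10: "D n (m-1) = 0"
  shows "(0 - real m * cC) - (\<Sum>k=1..n. t^(k-1) * D (k-1) (m-1) + t^k / real k * (0 - real m * cS (k-1)))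
     + (\<Sum>r=1..m-1. \<Sum>k=0..n. real k * t^(k-1) * P k r + t^k * (D k r - real r * R k r))
     + s * t^n + (\<Sum>k=1..n. t^(k-1) * R (k-1) 1 + t^k / real k * cK (k-1)) + cG = 0"
proof -
  define E where "E k = (if k=0 then cG - real m * cC else 0) - (if k<n then D k (m-1) else 0)
     + (if 1\<le>k then real m * cS (k-1) / real k else 0)
     + (\<Sum>r=1..m-1. (if k<n then real (k+1) * P (k+1) r else 0) + D k r - real r * R k r)
     + (if k=n then s else 0) + (if k<n then R k 1 else 0) + (if 1\<le>k then cK (k-1) / real k else 0)" for k
  have E0: "E k = 0" if "k \<in> {0..n}" for k
    unfolding E_def by (rule Ek_zero[OF assms]) (use that in auto)
  have a1: "(\<Sum>k=1..n. t^(k-1) * D (k-1) (m-1) + t^k / real k * (0 - real m * cS (k-1)))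
      = (\<Sum>k=0..n. t^k * (if k<n then D k (m-1) else 0)) - (\<Sum>k=0..n. t^k * (if 1\<le>k then real m * cS (k-1) / real k else 0))"
  proof -
    have s1: "(\<Sum>k=1..n. t^(k-1) * D (k-1) (m-1)) = (\<Sum>k=0..n. t^k * (if k<n then D k (m-1) else 0))"
      by (rule shiftA)
    have s2: "(\<Sum>k=1..n. t^k / real k * (0 - real m * cS (k-1))) = (\<Sum>k=0..n. t^k * (if 1\<le>k then (0 - real m * cS (k-1)) / real k else 0))"
      by (rule shiftC)
    have s3: "(\<Sum>k=0..n. t^k * (if 1\<le>k then (0 - real m * cS (k-1)) / real k else 0))
       = - (\<Sum>k=0..n. t^k * (if 1\<le>k then real m * cS (k-1) / real k else 0))"
      by (simp only: sum_negf[symmetric]) (rule sum.cong, auto)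
    show ?thesis using s1 s2 s3 by (simp only: sum.distrib)
  qed
  have a2: "(\<Sum>r=1..m-1. \<Sum>k=0..n. real k * t^(k-1) * P k r + t^k * (D k r - real r * R k r))
      = (\<Sum>k=0..n. t^k * (\<Sum>r=1..m-1. (if k<n then real (k+1) * P (k+1) r else 0) + D k r - real r * R k r))"
  proof -
    have "(\<Sum>r=1..m-1. \<Sum>k=0..n. real k * t^(k-1) * P k r + t^k * (D k r - real r * R k r))
       = (\<Sum>r=1..m-1. \<Sum>k=0..n. t^k * ((if k<n then real (k+1) * P (k+1) r else 0) + D k r - real r * R k r))"
    proof (rule sum.cong[OF refl])
      fix r
      have sB: "(\<Sum>k=0..n. real k * t^(k-1) * P k r) = (\<Sum>k=0..n. t^k * (if k<n then real (k+1) * P (k+1) r else 0))"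
        by (rule shiftB)
      have "(\<Sum>k=0..n. real k * t^(k-1) * P k r + t^k * (D k r - real r * R k r))
          = (\<Sum>k=0..n. real k * t^(k-1) * P k r) + (\<Sum>k=0..n. t^k * (D k r - real r * R k r))"
        by (rule sum.distrib)
      also have "\<dots> = (\<Sum>k=0..n. t^k * (if k<n then real (k+1) * P (k+1) r else 0) + t^k * (D k r - real r * R k r))"
        unfolding sB by (rule sum.distrib[symmetric])
      also have "\<dots> = (\<Sum>k=0..n. t^k * ((if k<n then real (k+1) * P (k+1) r else 0) + D k r - real r * R k r))"
        by (rule sum.cong) (simp_all add: algebra_simps)
      finally show "(\<Sum>k=0..n. real k * t^(k-1) * P k r + t^k * (D k r - real r * R k r))
          = (\<Sum>k=0..n. t^k * ((if k<n then real (k+1) * P (k+1) r else 0) + D k r - real r * R k r))" .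
    qed
    also have "\<dots> = (\<Sum>k=0..n. \<Sum>r=1..m-1. t^k * ((if k<n then real (k+1) * P (k+1) r else 0) + D k r - real r * R k r))"
      by (rule sum.swap)
    finally show ?thesis by (simp add: sum_distrib_left)
  qed
  have a3: "(\<Sum>k=1..n. t^(k-1) * R (k-1) 1 + t^k / real k * cK (k-1))
      = (\<Sum>k=0..n. t^k * (if k<n then R k 1 else 0)) + (\<Sum>k=0..n. t^k * (if 1\<le>k then cK (k-1) / real k else 0))"
  proof -
    have s1: "(\<Sum>k=1..n. t^(k-1) * R (k-1) 1) = (\<Sum>k=0..n. t^k * (if k<n then R k 1 else 0))"
      by (rule shiftA)
    have s2: "(\<Sum>k=1..n. t^k / real k * cK (k-1)) = (\<Sum>k=0..n. t^k * (if 1\<le>k then cK (k-1) / real k else 0))"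
      by (rule shiftC)
    show ?thesis by (simp only: sum.distrib s1 s2)
  qed
  have a4: "s * t^n = (\<Sum>k=0..n. t^k * (if k=n then s else 0))"
    by (simp add: if_distrib[of "\<lambda>x. t^_ * x"] sum.delta' cong: if_cong)
  have a5: "cG - real m * cC = (\<Sum>k=0..n. t^k * (if k=0 then cG - real m * cC else 0))"
  proof -
    have "(\<Sum>k=0..n. t^k * (if k=0 then cG - real m * cC else 0)) = (\<Sum>k=0..n. if k = 0 then cG - real m * cC else 0)"
      by (rule sum.cong) auto
    then show ?thesis by (simp add: sum.delta)
  qed
  have "(0 - real m * cC) - (\<Sum>k=1..n. t^(k-1) * D (k-1) (m-1) + t^k / real k * (0 - real m * cS (k-1)))
     + (\<Sum>r=1..m-1. \<Sum>k=0..n. real k * t^(k-1) * P k r + t^k * (D k r - real r * R k r))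
     + s * t^n + (\<Sum>k=1..n. t^(k-1) * R (k-1) 1 + t^k / real k * cK (k-1)) + cG
     = (\<Sum>k=0..n. t^k * E k)"
  proof -
    have rhs: "(\<Sum>k=0..n. t^k * E k) = (\<Sum>k=0..n. t^k * (if k=0 then cG - real m * cC else 0))
       - (\<Sum>k=0..n. t^k * (if k<n then D k (m-1) else 0))
       + (\<Sum>k=0..n. t^k * (if 1\<le>k then real m * cS (k-1) / real k else 0))
       + (\<Sum>k=0..n. t^k * (\<Sum>r=1..m-1. (if k<n then real (k+1) * P (k+1) r else 0) + D k r - real r * R k r))
       + (\<Sum>k=0..n. t^k * (if k=n then s else 0)) + (\<Sum>k=0..n. t^k * (if k<n then R k 1 else 0))
       + (\<Sum>k=0..n. t^k * (if 1\<le>k then cK (k-1) / real k else 0))"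
      unfolding E_def by (simp only: distrib_left right_diff_distrib sum.distrib sum_subtractf)
    show ?thesis using a1 a2 a3 a4 a5 rhs by linarith
  qed
  also have "\<dots> = 0" by (simp add: E0)
  finally show ?thesis .
qed



lemma vpow_lin: "vpow (\<lambda>p xs. A p xs - (\<Sum>k\<in>K. c k * B k p xs)) r q v = vpow A r q v - (\<Sum>k\<in>K. c k * vpow (B k) r q v)"
proof -
  have "vpow (\<lambda>p xs. A p xs - (\<Sum>k\<in>K. c k * B k p xs)) r q v
      = vpow A r q v - (\<Sum>xs\<in>{xs. length xs = r}. \<Sum>k\<in>K. c k * B k q xs * pv v xs)"
    unfolding vpow_def by (simp add: left_diff_distrib sum_subtractf sum_distrib_right)
  also have "(\<Sum>xs\<in>{xs. length xs = r}. \<Sum>k\<in>K. c k * B k q xs * pv v xs) = (\<Sum>k\<in>K. c k * vpow (B k) r q v)"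
    unfolding vpow_def by (subst sum.swap) (simp add: sum_distrib_left mult_ac)
  finally show ?thesis .
qed

lemma vpow_cong: "(\<And>xs. length xs = r \<Longrightarrow> T q xs = T' q xs) \<Longrightarrow> vpow T r q v = vpow T' r q v"
  unfolding vpow_def by (intro sum.cong) auto

lemma vpow_zero: "(\<And>xs. length xs = r \<Longrightarrow> T q xs = 0) \<Longrightarrow> vpow T r q v = 0"
  unfolding vpow_def by (intro sum.neutral) auto

lemma vpow_lin2: "vpow (\<lambda>p xs. a * X p xs - b * Y p xs) r q v = a * vpow X r q v - b * vpow Y r q v"
  unfolding vpow_def sum_distrib_left sum_subtractf[symmetric] by (intro sum.cong) (auto simp: algebra_simps)

lemma vpow_scale: "vpow (\<lambda>p xs. a * X p xs) r q v = a * vpow X r q v"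
  unfolding vpow_def by (simp add: sum_distrib_left mult_ac)

theorem theorem1:
  fixes g :: "real^'n \<Rightarrow> real^'n^'n" and Q :: "real^'n \<Rightarrow> real^'n"
    and U :: "(real^'n) set" and C :: "'n tensor" and L :: "nat \<Rightarrow> nat \<Rightarrow> 'n tensor"
    and G :: "real^'n \<Rightarrow> real" and s :: real and m n :: nat
  assumes U: "open U"
    and g_smooth: "\<And>a b. smooth_on U (\<lambda>q. g q $ a $ b)"
    and g_sym: "\<And>q. q \<in> U \<Longrightarrow> transpose (g q) = g q"
    and g_nondeg: "\<And>q. q \<in> U \<Longrightarrow> invertible (g q)"
    and Q_smooth: "\<And>a. smooth_on U (\<lambda>q. Q q $ a)"
    and m: "m \<ge> 3" and n: "n \<ge> 1"
    and G_smooth: "smooth_on U G"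
    and C_smooth: "smooth_tensor U m C"
    and C_killing: "killing g U m C"
    and L_smooth: "\<And>k r. k \<le> n \<Longrightarrow> 1 \<le> r \<Longrightarrow> r \<le> m - 1 \<Longrightarrow> smooth_tensor U r (L k r)"
    and L_sym: "\<And>k r. k \<le> n \<Longrightarrow> 1 \<le> r \<Longrightarrow> r \<le> m - 1 \<Longrightarrow> sym_tensor U r (L k r)"
    and i_a: "\<And>k. k < n \<Longrightarrow> killing g U m (symz (covd g (L k (m - 1))))"
    and i_b: "killing g U (m - 1) (L n (m - 1))"
    and ii: "\<And>q. q \<in> U \<Longrightarrow> contr (L n 1) Q q [] = s"
    and iii_1: "\<And>q xs. q \<in> U \<Longrightarrow> length xs = m - 1 \<Longrightarrow>
        symz (covd g (L n (m - 2))) q xs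
          = - (real m / real n) * contr (symz (covd g (L (n - 1) (m - 1)))) Q q xs"
    and iii_2: "\<And>k q xs. 2 \<le> k \<Longrightarrow> k \<le> n \<Longrightarrow> q \<in> U \<Longrightarrow> length xs = m - 1 \<Longrightarrow>
        symz (covd g (L (k - 1) (m - 2))) q xs
          = - (real m / real (k - 1)) * contr (symz (covd g (L (k - 2) (m - 1)))) Q q xs
            - real k * L k (m - 1) q xs"
    and iii_3: "\<And>q xs. q \<in> U \<Longrightarrow> length xs = m - 1 \<Longrightarrow>
        symz (covd g (L 0 (m - 2))) q xs = real m * contr C Q q xs - L 1 (m - 1) q xs"
    and iii_4: "\<And>r q xs. 2 \<le> r \<Longrightarrow> r \<le> m - 2 \<Longrightarrow> q \<in> U \<Longrightarrow> length xs = r \<Longrightarrow>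
        symz (covd g (L n (r - 1))) q xs = real (r + 1) * contr (L n (r + 1)) Q q xs"
    and iii_5: "\<And>k r q xs. 1 \<le> k \<Longrightarrow> k \<le> n \<Longrightarrow> 2 \<le> r \<Longrightarrow> r \<le> m - 2 \<Longrightarrow> q \<in> U \<Longrightarrow>
        length xs = r \<Longrightarrow>
        symz (covd g (L (k - 1) (r - 1))) q xs
          = real (r + 1) * contr (L (k - 1) (r + 1)) Q q xs - real k * L k r q xs"
    and iii_6: "\<And>q i. q \<in> U \<Longrightarrow>
        pd (\<lambda>p. contr (L (n - 1) 1) Q p []) i q = 2 * real n * contr (L n 2) Q q [i]"
    and iii_7: "\<And>k q i. 2 \<le> k \<Longrightarrow> k \<le> n \<Longrightarrow> q \<in> U \<Longrightarrow>
        pd (\<lambda>p. contr (L (k - 2) 1) Q p []) i q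
          = 2 * real (k - 1) * contr (L (k - 1) 2) Q q [i] - real k * real (k - 1) * L k 1 q [i]"
    and iii_8: "\<And>q i. q \<in> U \<Longrightarrow> pd G i q = 2 * contr (L 0 2) Q q [i] - L 1 1 q [i]"
  shows "first_integral g Q U (Imn g Q C L G s m n)"
proof -
  define S where "S k = symz (covd g (L k (m - 1)))" for k
  have m1: "Suc (m - 1) = m" "Suc (m - 2) = m - 1" "m - 1 - 1 = m - 2" "Suc (m - Suc 0) = m" "Suc (m - 2) = m - Suc 0"
    using m by auto
  have main: "((\<lambda>\<tau>. Imn g Q C L G s m n \<tau> (x \<tau>) (v \<tau>)) has_real_derivative 0) (at t)"
    if xd: "(x has_vector_derivative v t) (at t)" and vd: "(v has_vector_derivative a) (at t)"
      and acc: "\<And>i. a $ i = - (\<Sum>b\<in>UNIV. \<Sum>c\<in>UNIV. christ g i b c (x t) * v t $ b * v t $ c) - Q (x t) $ i"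
      and xU: "x t \<in> U" for x v a t
  proof -
    define q where "q = x t"
    define w where "w = v t"
    have qU: "q \<in> U" using xU by (simp add: q_def)
    define P where "P k r = vpow (L k r) r q w" for k r
    define Dd where "Dd k r = vpow (covd g (L k r)) (Suc r) q w" for k r
    define R where "R k r = vpow (contr (L k r) Q) (r - 1) q w" for k r
    define cS where "cS j = vpow (contr (S j) Q) (m - 1) q w" for j
    define cC where "cC = vpow (contr C Q) (m - 1) q w"
    define cK where "cK j = (\<Sum>i\<in>UNIV. pd (\<lambda>p. contr (L j 1) Q p []) i q * w $ i)" for j
    define cG where "cG = (\<Sum>i\<in>UNIV. pd G i q * w $ i)"
    have dC: "((\<lambda>\<tau>. vpow C m (x \<tau>) (v \<tau>)) has_real_derivative (0 - real m * cC)) (at t)"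
    proof -
      have dT: "(\<lambda>q. C q xs) differentiable (at (x t))" if "length xs = m" for xs
        using C_smooth that xU unfolding smooth_tensor_def by (auto intro: smooth_diff)
      have sT: "C (x t) xs = C (x t) ys" if "length xs = m" "mset xs = mset ys" for xs ys
        using C_killing that xU unfolding killing_def sym_tensor_def by blast
      have z: "vpow (covd g C) (Suc m) q w = 0"
      proof -
        have "vpow (covd g C) (Suc m) q w = vpow (symz (covd g C)) (Suc m) q w" by (simp add: vpow_symz)
        also have "\<dots> = 0" using C_killing qU unfolding killing_def by (intro vpow_zero) auto
        finally show ?thesis .
      qed
      have e1: "vpow (covd g C) (Suc m) (x t) (v t) = 0" using z unfolding q_def w_def .
      have e2: "vpow (contr C Q) (m - 1) (x t) (v t) = cC" unfolding cC_def q_def w_def ..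
      have dd: "((\<lambda>\<tau>. vpow C m (x \<tau>) (v \<tau>)) has_real_derivative
          (vpow (covd g C) (Suc m) (x t) (v t) - real m * vpow (contr C Q) (m - 1) (x t) (v t))) (at t)"
        by (rule vpow_deriv[where x=x and v=v and t=t and a=a and g=g and Q=Q, OF xd vd acc]) (auto intro: dT sT)
      show ?thesis using dd unfolding e1 e2 by simp
    qed
    have dS: "((\<lambda>\<tau>. vpow (S j) m (x \<tau>) (v \<tau>)) has_real_derivative (0 - real m * cS j)) (at t)" if j: "j < n" for j
    proof -
      have dT: "(\<lambda>q. S j q xs) differentiable (at (x t))" if "length xs = m" for xs
        unfolding S_def
      proof (rule symz_diff[OF _ that])
        fix ys :: "'n list" assume "length ys = m"
        then have ly: "length ys = Suc (m - 1)" using m1 by simp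
        show "(\<lambda>p. covd g (L j (m - 1)) p ys) differentiable (at (x t))"
          by (rule covd_diff[OF U xU g_smooth g_nondeg _ ly])
             (use L_smooth[of j "m - 1"] j m in \<open>auto simp: smooth_tensor_def\<close>)
      qed
      have sT: "S j (x t) xs = S j (x t) ys" if "length xs = m" "mset xs = mset ys" for xs ys
        using i_a[OF j] that xU unfolding killing_def sym_tensor_def S_def by blast
      have z: "vpow (covd g (S j)) (Suc m) q w = 0"
      proof -
        have "vpow (covd g (S j)) (Suc m) q w = vpow (symz (covd g (S j))) (Suc m) q w" by (simp add: vpow_symz)
        also have "\<dots> = 0" using i_a[OF j] qU unfolding killing_def S_def by (intro vpow_zero) auto
        finally show ?thesis .
      qed
      have e1: "vpow (covd g (S j)) (Suc m) (x t) (v t) = 0" using z unfolding q_def w_def .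
      have e2: "vpow (contr (S j) Q) (m - 1) (x t) (v t) = cS j" unfolding cS_def q_def w_def ..
      have dd: "((\<lambda>\<tau>. vpow (S j) m (x \<tau>) (v \<tau>)) has_real_derivative
          (vpow (covd g (S j)) (Suc m) (x t) (v t) - real m * vpow (contr (S j) Q) (m - 1) (x t) (v t))) (at t)"
        by (rule vpow_deriv[where x=x and v=v and t=t and a=a and g=g and Q=Q, OF xd vd acc]) (auto intro: dT sT)
      show ?thesis using dd unfolding e1 e2 by simp
    qed
    have dL: "((\<lambda>\<tau>. vpow (L k r) r (x \<tau>) (v \<tau>)) has_real_derivative (Dd k r - real r * R k r)) (at t)"
      if "k \<le> n" "1 \<le> r" "r \<le> m - 1" for k r
    proof -
      have dT: "(\<lambda>q. L k r q xs) differentiable (at (x t))" if "length xs = r" for xs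
        using L_smooth[OF \<open>k \<le> n\<close> \<open>1 \<le> r\<close> \<open>r \<le> m - 1\<close>] that xU unfolding smooth_tensor_def by (auto intro: smooth_diff)
      have sT: "L k r (x t) xs = L k r (x t) ys" if "length xs = r" "mset xs = mset ys" for xs ys
        using L_sym[OF \<open>k \<le> n\<close> \<open>1 \<le> r\<close> \<open>r \<le> m - 1\<close>] that xU unfolding sym_tensor_def by blast
      have dd: "((\<lambda>\<tau>. vpow (L k r) r (x \<tau>) (v \<tau>)) has_real_derivative
          (vpow (covd g (L k r)) (Suc r) (x t) (v t) - real r * vpow (contr (L k r) Q) (r - 1) (x t) (v t))) (at t)"
        by (rule vpow_deriv[where x=x and v=v and t=t and a=a and g=g and Q=Q, OF xd vd acc]) (erule dT, erule (1) sT)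
      show ?thesis using dd unfolding Dd_def R_def q_def w_def .
    qed
    have dK: "((\<lambda>\<tau>. contr (L j 1) Q (x \<tau>) []) has_real_derivative cK j) (at t)" if "j \<le> n" for j
    proof -
      have "(\<lambda>p. contr (L j 1) Q p []) differentiable (at (x t))"
      proof -
        have Ld: "(\<lambda>p. L j 1 p ([] @ [c])) differentiable (at (x t))" for c
        proof -
          have "1 \<le> m - 1" using m by simp
          then have "smooth_on U (\<lambda>p. L j 1 p ([] @ [c]))"
            using L_smooth[OF \<open>j \<le> n\<close>, of 1] unfolding smooth_tensor_def by simp
          then show ?thesis using xU by (rule smooth_diff)
        qed
        have Qd: "(\<lambda>p. Q p $ c) differentiable (at (x t))" for c
          using Q_smooth xU by (auto intro: smooth_diff)
        show ?thesis unfolding contr_def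
          by (rule differentiable_sum) (simp, intro ballI differentiable_mult[OF Ld Qd])
      qed
      then show ?thesis using chain_pd[OF _ xd] unfolding cK_def q_def w_def by blast
    qed
    have dG: "((\<lambda>\<tau>. G (x \<tau>)) has_real_derivative cG) (at t)"
      using chain_pd[OF smooth_diff[OF G_smooth xU] xd] unfolding cG_def q_def w_def by blast
    have dpow: "((\<lambda>\<tau>. \<tau>^k / real k) has_real_derivative t^(k-1)) (at t)" if "k \<ge> 1" for k
      using DERIV_cdivide[OF DERIV_pow[of k t UNIV], of "real k"] that by simp
    have VS: "vpow (S j) m q w = Dd j (m - 1)" for j
      unfolding S_def Dd_def by (simp add: vpow_symz m1)
    have VL: "vpow (L k r) r q w = P k r" for k r by (simp add: P_def)
    have VK: "contr (L j 1) Q q [] = R j 1" for j by (simp add: R_def vpow_0)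
    have d1: "((\<lambda>\<tau>. \<Sum>k=1..n. \<tau>^k / real k * vpow (S (k-1)) m (x \<tau>) (v \<tau>)) has_real_derivative
        (\<Sum>k=1..n. t^(k-1) * Dd (k-1) (m-1) + t^k / real k * (0 - real m * cS (k-1)))) (at t)"
    proof (rule DERIV_sum)
      fix k assume k: "k \<in> {1..n}"
      show "((\<lambda>\<tau>. \<tau>^k / real k * vpow (S (k-1)) m (x \<tau>) (v \<tau>)) has_real_derivative
        t^(k-1) * Dd (k-1) (m-1) + t^k / real k * (0 - real m * cS (k-1))) (at t)"
        by (rule DERIV_cong[OF DERIV_mult[OF dpow dS]]) (use k VS in \<open>auto simp: q_def w_def\<close>)
    qed
    have d2: "((\<lambda>\<tau>. \<Sum>r=1..m-1. \<Sum>k=0..n. \<tau>^k * vpow (L k r) r (x \<tau>) (v \<tau>)) has_real_derivative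
        (\<Sum>r=1..m-1. \<Sum>k=0..n. real k * t^(k-1) * P k r + t^k * (Dd k r - real r * R k r))) (at t)"
    proof (rule DERIV_sum, rule DERIV_sum)
      fix r k assume r: "r \<in> {1..m-1}" and k: "k \<in> {0..n}"
      show "((\<lambda>\<tau>. \<tau>^k * vpow (L k r) r (x \<tau>) (v \<tau>)) has_real_derivative
          real k * t^(k-1) * P k r + t^k * (Dd k r - real r * R k r)) (at t)"
        by (rule DERIV_cong[OF DERIV_mult[OF DERIV_pow dL]]) (use r k VL in \<open>auto simp: q_def w_def\<close>)
    qed
    have d3: "((\<lambda>\<tau>. \<Sum>k=1..n. \<tau>^k / real k * contr (L (k-1) 1) Q (x \<tau>) []) has_real_derivative
        (\<Sum>k=1..n. t^(k-1) * R (k-1) 1 + t^k / real k * cK (k-1))) (at t)"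
    proof (rule DERIV_sum)
      fix k assume k: "k \<in> {1..n}"
      show "((\<lambda>\<tau>. \<tau>^k / real k * contr (L (k-1) 1) Q (x \<tau>) []) has_real_derivative
        t^(k-1) * R (k-1) 1 + t^k / real k * cK (k-1)) (at t)"
        by (rule DERIV_cong[OF DERIV_mult[OF dpow dK]]) (use k VK in \<open>auto simp: q_def w_def\<close>)
    qed
    have d4: "((\<lambda>\<tau>. s * \<tau>^(n+1) / real (n+1)) has_real_derivative s * t^n) (at t)"
      using DERIV_cmult[OF dpow[of "n+1"], of s] by simp
    have dall: "((\<lambda>\<tau>. vpow C m (x \<tau>) (v \<tau>) - (\<Sum>k=1..n. \<tau>^k / real k * vpow (S (k-1)) m (x \<tau>) (v \<tau>))
        + (\<Sum>r=1..m-1. \<Sum>k=0..n. \<tau>^k * vpow (L k r) r (x \<tau>) (v \<tau>))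
        + s * \<tau>^(n+1) / real (n+1) + (\<Sum>k=1..n. \<tau>^k / real k * contr (L (k-1) 1) Q (x \<tau>) []) + G (x \<tau>))
      has_real_derivative
        ((0 - real m * cC) - (\<Sum>k=1..n. t^(k-1) * Dd (k-1) (m-1) + t^k / real k * (0 - real m * cS (k-1)))
         + (\<Sum>r=1..m-1. \<Sum>k=0..n. real k * t^(k-1) * P k r + t^k * (Dd k r - real r * R k r))
         + s * t^n + (\<Sum>k=1..n. t^(k-1) * R (k-1) 1 + t^k / real k * cK (k-1)) + cG)) (at t)"
      by (rule DERIV_add[OF DERIV_add[OF DERIV_add[OF DERIV_add[OF DERIV_diff[OF dC d1] d2] d4] d3] dG])
    have h1: "Dd n (m-2) = - (real m / real n) * cS (n-1)"
    proof -
      have "Dd n (m-2) = vpow (symz (covd g (L n (m-2)))) (m-1) q w"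
        unfolding Dd_def by (simp add: vpow_symz m1)
      also have "\<dots> = vpow (\<lambda>p xs. - (real m / real n) * contr (S (n-1)) Q p xs) (m-1) q w"
        by (rule vpow_cong) (simp add: iii_1[OF qU] S_def)
      also have "\<dots> = - (real m / real n) * cS (n-1)" by (simp only: vpow_scale cS_def)
      finally show ?thesis .
    qed
    have h2: "Dd (k-1) (m-2) = - (real m / real (k-1)) * cS (k-2) - real k * P k (m-1)" if "2 \<le> k" "k \<le> n" for k
    proof -
      have "Dd (k-1) (m-2) = vpow (symz (covd g (L (k-1) (m-2)))) (m-1) q w"
        unfolding Dd_def by (simp add: vpow_symz m1)
      also have "\<dots> = vpow (\<lambda>p xs. - (real m / real (k-1)) * contr (S (k-2)) Q p xs - real k * L k (m-1) p xs) (m-1) q w"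
        unfolding S_def by (rule vpow_cong) (erule iii_2[OF that qU])
      also have "\<dots> = - (real m / real (k-1)) * cS (k-2) - real k * P k (m-1)" by (simp only: vpow_lin2 cS_def P_def)
      finally show ?thesis .
    qed
    have h3: "Dd 0 (m-2) = real m * cC - P 1 (m-1)"
    proof -
      have "Dd 0 (m-2) = vpow (symz (covd g (L 0 (m-2)))) (m-1) q w"
        unfolding Dd_def by (simp add: vpow_symz m1)
      also have "\<dots> = vpow (\<lambda>p xs. real m * contr C Q p xs - 1 * L 1 (m-1) p xs) (m-1) q w"
        by (rule vpow_cong) (simp add: iii_3[OF qU])
      also have "\<dots> = real m * cC - P 1 (m-1)" by (subst vpow_lin2) (simp only: cC_def P_def mult_1)
      finally show ?thesis .
    qed
    have h4: "Dd n (r-1) = real (r+1) * R n (r+1)" if "2 \<le> r" "r \<le> m-2" for r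
    proof -
      have rr: "Suc (r - 1) = r" "Suc (r - Suc 0) = r" using that by simp_all
      have "Dd n (r-1) = vpow (symz (covd g (L n (r-1)))) r q w"
        unfolding Dd_def by (simp add: vpow_symz rr)
      also have "\<dots> = vpow (\<lambda>p xs. real (r+1) * contr (L n (r+1)) Q p xs) r q w"
        by (rule vpow_cong) (erule iii_4[OF that qU])
      also have "\<dots> = real (r+1) * R n (r+1)" by (simp only: vpow_scale R_def add_diff_cancel_right')
      finally show ?thesis .
    qed
    have h5: "Dd (k-1) (r-1) = real (r+1) * R (k-1) (r+1) - real k * P k r"
      if "1 \<le> k" "k \<le> n" "2 \<le> r" "r \<le> m-2" for k r
    proof -
      have rr: "Suc (r - 1) = r" "Suc (r - Suc 0) = r" using that by simp_all
      have "Dd (k-1) (r-1) = vpow (symz (covd g (L (k-1) (r-1)))) r q w"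
        unfolding Dd_def by (simp add: vpow_symz rr)
      also have "\<dots> = vpow (\<lambda>p xs. real (r+1) * contr (L (k-1) (r+1)) Q p xs - real k * L k r p xs) r q w"
        by (rule vpow_cong) (erule iii_5[OF that qU])
      also have "\<dots> = real (r+1) * R (k-1) (r+1) - real k * P k r" by (simp only: vpow_lin2 R_def P_def add_diff_cancel_right')
      finally show ?thesis .
    qed
    have V1: "vpow T (2 - 1) q w = (\<Sum>i\<in>UNIV. T q [i] * w $ i)" for T :: "'n tensor"
      by (simp add: vpow_1)
    have V1': "vpow T 1 q w = (\<Sum>i\<in>UNIV. T q [i] * w $ i)" for T :: "'n tensor"
      by (simp add: vpow_1)
    have h6: "cK (n-1) = 2 * real n * R n 2"
    proof -
      have "cK (n-1) = (\<Sum>i\<in>UNIV. (2 * real n * contr (L n 2) Q q [i]) * w $ i)"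
        unfolding cK_def by (rule sum.cong[OF refl]) (simp only: iii_6[OF qU])
      also have "\<dots> = 2 * real n * R n 2"
        unfolding R_def V1 by (simp add: sum_distrib_left mult_ac)
      finally show ?thesis .
    qed
    have h7: "cK (k-2) = 2 * real (k-1) * R (k-1) 2 - real k * real (k-1) * P k 1" if "2 \<le> k" "k \<le> n" for k
    proof -
      have "cK (k-2) = (\<Sum>i\<in>UNIV. (2 * real (k - 1) * contr (L (k - 1) 2) Q q [i] - real k * real (k - 1) * L k 1 q [i]) * w $ i)"
        unfolding cK_def by (rule sum.cong[OF refl]) (simp only: iii_7[OF that qU])
      also have "\<dots> = 2 * real (k-1) * R (k-1) 2 - real k * real (k-1) * P k 1"
        unfolding R_def P_def V1 V1' sum_distrib_left sum_subtractf[symmetric]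
        by (rule sum.cong) (simp_all add: algebra_simps)
      finally show ?thesis .
    qed
    have h8: "cG = 2 * R 0 2 - P 1 1"
    proof -
      have "cG = (\<Sum>i\<in>UNIV. (2 * contr (L 0 2) Q q [i] - L 1 1 q [i]) * w $ i)"
        unfolding cG_def by (rule sum.cong[OF refl]) (simp only: iii_8[OF qU])
      also have "\<dots> = 2 * R 0 2 - P 1 1"
        unfolding R_def P_def V1 V1' sum_distrib_left sum_subtractf[symmetric]
        by (rule sum.cong) (simp_all add: algebra_simps)
      finally show ?thesis .
    qed
    have h9: "R n 1 = s"
    proof -
      have z1: "(1::nat) - 1 = 0" by simp
      show ?thesis unfolding R_def z1 vpow_0 by (rule ii[OF qU])
    qed
    have h10: "Dd n (m-1) = 0"
    proof -
      have "Dd n (m-1) = vpow (symz (covd g (L n (m-1)))) (Suc (m-1)) q w"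
        unfolding Dd_def by (simp add: vpow_symz)
      also have "\<dots> = 0" using i_b qU unfolding killing_def by (intro vpow_zero) auto
      finally show ?thesis .
    qed
    have zero: "(0 - real m * cC) - (\<Sum>k=1..n. t^(k-1) * Dd (k-1) (m-1) + t^k / real k * (0 - real m * cS (k-1)))
         + (\<Sum>r=1..m-1. \<Sum>k=0..n. real k * t^(k-1) * P k r + t^k * (Dd k r - real r * R k r))
         + s * t^n + (\<Sum>k=1..n. t^(k-1) * R (k-1) 1 + t^k / real k * cK (k-1)) + cG = 0"
      by (rule main_alg[OF m n h1 h2 h3 h4 h5 h6 h7 h8 h9 h10])
    have eqI: "Imn g Q C L G s m n \<tau> (x \<tau>) (v \<tau>) = vpow C m (x \<tau>) (v \<tau>) - (\<Sum>k=1..n. \<tau>^k / real k * vpow (S (k-1)) m (x \<tau>) (v \<tau>))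
        + (\<Sum>r=1..m-1. \<Sum>k=0..n. \<tau>^k * vpow (L k r) r (x \<tau>) (v \<tau>))
        + s * \<tau>^(n+1) / real (n+1) + (\<Sum>k=1..n. \<tau>^k / real k * contr (L (k-1) 1) Q (x \<tau>) []) + G (x \<tau>)" for \<tau>
      unfolding Imn_def S_def by (simp only: vpow_lin)
    show ?thesis using dall unfolding zero eqI[symmetric] .
  qed
  show ?thesis unfolding first_integral_def
  proof (intro allI impI ballI)
    fix J x v t1 t2
    assume sol: "is_solution g Q U J x v" and t1: "t1 \<in> J" and t2: "t2 \<in> J"
    from sol obtain a where J: "open J" "is_interval J" and
      A: "\<And>t. t \<in> J \<Longrightarrow> x t \<in> U \<and> (x has_vector_derivative v t) (at t) \<and> (v has_vector_derivative a t) (at t) \<and>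
          (\<forall>i. a t $ i = - (\<Sum>b\<in>UNIV. \<Sum>c\<in>UNIV. christ g i b c (x t) * v t $ b * v t $ c) - Q (x t) $ i)"
      unfolding is_solution_def by blast
    have "\<exists>c. \<forall>t\<in>J. Imn g Q C L G s m n t (x t) (v t) = c"
    proof (rule has_field_derivative_zero_constant)
      show "convex J" using J(2) by (rule is_interval_convex)
      fix t assume t: "t \<in> J"
      show "((\<lambda>t. Imn g Q C L G s m n t (x t) (v t)) has_real_derivative 0) (at t within J)"
        using main[of x v t "a t"] A[OF t] by (auto intro: has_field_derivative_at_within)
    qed
    then show "Imn g Q C L G s m n t1 (x t1) (v t1) = Imn g Q C L G s m n t2 (x t2) (v t2)"
      using t1 t2 by auto
  qed
qed


end
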